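(* Let $q$ be a prime power. There exists a $2$-code of $\mathcal S_{3,q}$ of size $(q^2-1)(q^2+q+1)+1$.
   Context: $\mathcal S_{3,q}$ is the set of $3\times 3$ symmetric matrices over ${\rm GF}(q)$, with rank distance $d_r(A,B)={\rm rk}(A-B)$. A $2$-code is a non-empty subset whose minimum distance $\min\{{\rm rk}(c_1-c_2): c_1\neq c_2\}$ equals $2$. *)

theory Defs
  imports "Jordan_Normal_Form.DL_Rank"
begin

definition sym_mats3 :: "'a::field mat set" where
  "sym_mats3 = {A. A \<in> carrier_mat 3 3 \<and> transpose_mat A = A}"

definition rank_dist :: "'a::field mat \<Rightarrow> 'a mat \<Rightarrow> nat" where
  "rank_dist A B = vec_space.rank 3 (A - B)"

definition is_code :: "nat \<Rightarrow> 'a::field mat set \<Rightarrow> bool" where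
  "is_code d C \<longleftrightarrow> C \<noteq> {} \<and> C \<subseteq> sym_mats3 \<and>
     Min {rank_dist c1 c2 | c1 c2. c1 \<in> C \<and> c2 \<in> C \<and> c1 \<noteq> c2} = d"

end

theory Submission
  imports Defs
begin


lemma det2: assumes "A \<in> carrier_mat 2 2"
  shows "det A = A $$ (0,0) * A $$ (1,1) - A $$ (0,1) * A $$ (1,0)"
proof -
  have "det A = (\<Sum>i<2. A $$ (i,0) * cofactor A i 0)"
    by (rule laplace_expansion_column[OF assms], simp)
  also have "\<dots> = A $$ (0,0) * cofactor A 0 0 + A $$ (1,0) * cofactor A 1 0"
    by (simp add: numeral_2_eq_2)
  also have "cofactor A 0 0 = A $$ (1,1)"
    unfolding cofactor_def using assms
    by (subst det_single, auto simp: mat_delete_def)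
  also have "cofactor A 1 0 = - A $$ (0,1)"
    unfolding cofactor_def using assms
    by (subst det_single, auto simp: mat_delete_def)
  finally show ?thesis by (simp add: algebra_simps)
qed

lemma det3: assumes "A \<in> carrier_mat 3 3"
  shows "det A = A $$ (0,0) * (A $$ (1,1) * A $$ (2,2) - A $$ (1,2) * A $$ (2,1))
     - A $$ (1,0) * (A $$ (0,1) * A $$ (2,2) - A $$ (0,2) * A $$ (2,1))
     + A $$ (2,0) * (A $$ (0,1) * A $$ (1,2) - A $$ (0,2) * A $$ (1,1))"
proof -
  have "det A = (\<Sum>i<3. A $$ (i,0) * cofactor A i 0)"
    by (rule laplace_expansion_column[OF assms], simp)
  also have "\<dots> = A $$ (0,0) * cofactor A 0 0 + A $$ (1,0) * cofactor A 1 0 + A $$ (2,0) * cofactor A 2 0"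
    by (simp add: lessThan_nat_numeral)
  also have "cofactor A 0 0 = A $$ (1,1) * A $$ (2,2) - A $$ (1,2) * A $$ (2,1)"
    unfolding cofactor_def using assms
    by (subst det2, auto simp: mat_delete_def numeral_2_eq_2)
  also have "cofactor A 1 0 = - (A $$ (0,1) * A $$ (2,2) - A $$ (0,2) * A $$ (2,1))"
    unfolding cofactor_def using assms
    by (subst det2, auto simp: mat_delete_def numeral_2_eq_2)
  also have "cofactor A 2 0 = A $$ (0,1) * A $$ (1,2) - A $$ (0,2) * A $$ (1,1)"
    unfolding cofactor_def using assms
    by (subst det2, auto simp: mat_delete_def numeral_2_eq_2)
  finally show ?thesis by (simp add: algebra_simps)
qed


datatype 'a s6 = S6 'a 'a 'a 'a 'a 'a

fun sm :: "'a::field s6 \<Rightarrow> 'a mat" where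
  "sm (S6 a b c d e f) = mat 3 3 (\<lambda>(i,j). [[a,b,c],[b,d,e],[c,e,f]] ! i ! j)"

fun rk1 :: "'a::field s6 \<Rightarrow> bool" where
  "rk1 (S6 a b c d e f) = (a*d = b*b \<and> a*e = b*c \<and> b*e = c*d \<and> a*f = c*c \<and> b*f = c*e \<and> d*f = e*e)"

definition Em :: "nat \<Rightarrow> nat \<Rightarrow> 'a::field mat" where
  "Em k l = mat 3 3 (\<lambda>(i,j). if i = k \<and> j = l then 1 else 0)"

lemma sm_carrier: "sm X \<in> carrier_mat 3 3"
  by (cases X, simp)

lemma Em_carrier: "Em k l \<in> carrier_mat 3 3" by (simp add: Em_def)

lemma Em_rank: "vec_space.rank 3 (Em k l :: 'a::field mat) \<le> 1"
  by (rule vec_space.rank_le_1_product_entries[of _ _ 3 "\<lambda>i. if i = k then 1 else 0" "\<lambda>j. if j = l then 1 else 0"],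
      auto simp: Em_def)

lemma det_sm_Em:
  fixes X :: "'a::field s6"
  assumes "vec_space.rank 3 (sm X) \<le> 1"
  shows "det (sm X + Em k l) = 0"
proof -
  have c: "sm X + Em k l \<in> carrier_mat 3 3" using sm_carrier by (auto simp: Em_def)
  have "vec_space.rank 3 (sm X + Em k l) \<le> vec_space.rank 3 (sm X) + vec_space.rank 3 (Em k l :: 'a mat)"
    by (rule vec_space.rank_subadditive[OF sm_carrier Em_carrier])
  also have "\<dots> \<le> 2" using assms Em_rank[of k l, where 'a='a] by simp
  finally have "vec_space.rank 3 (sm X + Em k l) \<noteq> 3" by simp
  thus ?thesis using vec_space.det_rank_iff[OF c] by blast
qed

lemma det_sm:
  assumes "vec_space.rank 3 (sm X) \<le> 1"
  shows "det (sm X) = 0"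
  using vec_space.det_rank_iff[OF sm_carrier, of X] assms by auto

lemma rank_ge2:
  fixes X :: "'a::field s6"
  assumes "\<not> rk1 X" shows "2 \<le> vec_space.rank 3 (sm X)"
proof (rule ccontr)
  assume "\<not> 2 \<le> vec_space.rank 3 (sm X)"
  hence r: "vec_space.rank 3 (sm X) \<le> 1" by simp
  obtain a b c d e f where X: "X = S6 a b c d e f" by (cases X)
  have h0: "det (sm X) = 0" using det_sm[OF r] .
  have e: "\<And>k l. det (sm X + Em k l) = 0" using det_sm_Em[OF r] .
  have c: "\<And>k l. sm X + Em k l \<in> carrier_mat 3 3" using sm_carrier by (auto simp: Em_def)
  have E: "det (sm X) = 0" "det (sm X + Em 0 0) = 0" "det (sm X + Em 1 0) = 0" "det (sm X + Em 2 0) = 0"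
    "det (sm X + Em 1 1) = 0" "det (sm X + Em 2 1) = 0" "det (sm X + Em 2 2) = 0"
    using h0 e by auto
  have c0: "sm X \<in> carrier_mat 3 3" by (rule sm_carrier)
  have F: "\<And>k l. det (sm X + Em k l) - det (sm X) =
     (sm X + Em k l) $$ (0,0) * ((sm X + Em k l) $$ (1,1) * (sm X + Em k l) $$ (2,2) - (sm X + Em k l) $$ (1,2) * (sm X + Em k l) $$ (2,1))
     - (sm X + Em k l) $$ (1,0) * ((sm X + Em k l) $$ (0,1) * (sm X + Em k l) $$ (2,2) - (sm X + Em k l) $$ (0,2) * (sm X + Em k l) $$ (2,1))
     + (sm X + Em k l) $$ (2,0) * ((sm X + Em k l) $$ (0,1) * (sm X + Em k l) $$ (1,2) - (sm X + Em k l) $$ (0,2) * (sm X + Em k l) $$ (1,1))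
     - (a * (d * f - e * e) - b * (b * f - c * e) + c * (b * e - c * d))"
    unfolding det3[OF c] det3[OF c0] by (simp add: X)
  have m1: "a*d - b*b = 0" using F[of 2 2] E by (simp add: Em_def X algebra_simps)
  have m2: "a*e - b*c = 0" using F[of 2 1] E by (simp add: Em_def X algebra_simps)
  have m3: "b*e - c*d = 0" using F[of 2 0] E by (simp add: Em_def X algebra_simps)
  have m4: "a*f - c*c = 0" using F[of 1 1] E by (simp add: Em_def X algebra_simps)
  have m5: "b*f - c*e = 0" using F[of 1 0] E by (simp add: Em_def X algebra_simps)
  have m6: "d*f - e*e = 0" using F[of 0 0] E by (simp add: Em_def X algebra_simps)
  have "rk1 X" using m1 m2 m3 m4 m5 m6 by (simp add: X)
  thus False using assms by simp
qed


fun sub6 :: "'a::field s6 \<Rightarrow> 'a s6 \<Rightarrow> 'a s6" where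
  "sub6 (S6 a b c d e f) (S6 a' b' c' d' e' f') = S6 (a-a') (b-b') (c-c') (d-d') (e-e') (f-f')"

fun mv :: "'a::field s6 \<Rightarrow> 'a \<times> 'a \<times> 'a \<Rightarrow> 'a \<times> 'a \<times> 'a" where
  "mv (S6 a b c d e f) (x1,x2,x3) = (a*x1+b*x2+c*x3, b*x1+d*x2+e*x3, c*x1+e*x2+f*x3)"

fun dot :: "'a::field \<times> 'a \<times> 'a \<Rightarrow> 'a \<times> 'a \<times> 'a \<Rightarrow> 'a" where
  "dot (x1,x2,x3) (y1,y2,y3) = x1*y1+x2*y2+x3*y3"

fun ent :: "'a::field s6 \<Rightarrow> nat \<Rightarrow> nat \<Rightarrow> 'a" where
  "ent (S6 a b c d e f) i j = [[a,b,c],[b,d,e],[c,e,f]] ! i ! j"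

fun vf :: "'a \<times> 'a \<times> 'a \<Rightarrow> nat \<Rightarrow> 'a" where
  "vf (x1,x2,x3) k = [x1,x2,x3] ! k"

lemma key_gen:
  fixes E :: "nat \<Rightarrow> nat \<Rightarrow> 'a::comm_ring_1"
  assumes M: "\<And>a b c d. a<3 \<Longrightarrow> b<3 \<Longrightarrow> c<3 \<Longrightarrow> d<3 \<Longrightarrow> E a b * E c d = E a d * E c b"
  and S: "\<And>i j. i<3 \<Longrightarrow> j<3 \<Longrightarrow> E i j = E j i" and ij: "j<3" "i<3"
  shows "(\<Sum>k<3. E j k * p k) * (\<Sum>l<3. E i l * q l) = (\<Sum>k<3. \<Sum>l<3. p k * E k l * q l) * E j i"
proof -
  have "(\<Sum>k<3. E j k * p k) * (\<Sum>l<3. E i l * q l) = (\<Sum>k<3. \<Sum>l<3. (E j k * p k) * (E i l * q l))"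
    by (simp add: sum_product)
  also have "\<dots> = (\<Sum>k<3. \<Sum>l<3. p k * E k l * q l * E j i)"
  proof (rule sum.cong[OF refl], rule sum.cong[OF refl])
    fix k l assume "k \<in> {..<3::nat}" "l \<in> {..<3::nat}"
    hence kl: "k < 3" "l < 3" by auto
    have "E j k * E i l = E k j * E i l" using S[of j k] kl ij by simp
    also have "\<dots> = E k l * E i j" using M[of k j i l] kl ij by simp
    also have "\<dots> = E k l * E j i" using S[of i j] ij by simp
    finally have "E j k * E i l = E k l * E j i" .
    thus "(E j k * p k) * (E i l * q l) = p k * E k l * q l * E j i"
      by (metis (no_types, lifting) mult.assoc mult.commute mult.left_commute)
  qed
  also have "\<dots> = (\<Sum>k<3. \<Sum>l<3. p k * E k l * q l) * E j i"
    by (simp add: sum_distrib_right)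
  finally show ?thesis .
qed

lemma less3: "(i::nat) < 3 \<Longrightarrow> i = 0 \<or> i = 1 \<or> i = 2" by arith

lemma rk1_minors:
  fixes D :: "'a::field s6"
  assumes "rk1 D" "a<3" "b<3" "c<3" "d<3"
  shows "ent D a b * ent D c d = ent D a d * ent D c b"
proof -
  obtain a1 b1 c1 d1 e1 f1 where D: "D = S6 a1 b1 c1 d1 e1 f1" by (cases D)
  have m: "a1*d1 = b1*b1" "a1*e1 = b1*c1" "b1*e1 = c1*d1" "a1*f1 = c1*c1" "b1*f1 = c1*e1" "d1*f1 = e1*e1"
    using assms(1) by (simp_all add: D)
  show ?thesis using less3[OF assms(2)] less3[OF assms(3)] less3[OF assms(4)] less3[OF assms(5)]
    apply (simp add: D)
    apply (elim disjE)
    apply (simp_all add: m mult.commute[of b1 a1] mult.commute[of c1 a1] mult.commute[of d1 a1]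
       mult.commute[of e1 a1] mult.commute[of f1 a1] mult.commute[of c1 b1] mult.commute[of d1 b1]
       mult.commute[of e1 b1] mult.commute[of f1 b1] mult.commute[of d1 c1] mult.commute[of e1 c1]
       mult.commute[of f1 c1] mult.commute[of e1 d1] mult.commute[of f1 d1] mult.commute[of f1 e1])
    done
qed


lemma S_ent: "i<3 \<Longrightarrow> j<3 \<Longrightarrow> ent D i j = ent D j i"
  by (cases D, auto dest!: less3)

lemma mv_sum: "j < 3 \<Longrightarrow> vf (mv D p) j = (\<Sum>k<3. ent D j k * vf p k)"
  by (cases D, cases p, auto dest!: less3 simp: lessThan_nat_numeral)

lemma dot_sum: "dot (mv D p) q = (\<Sum>k<3. \<Sum>l<3. vf p k * ent D k l * vf q l)"
  by (cases D, cases p, cases q, simp add: lessThan_nat_numeral algebra_simps)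

lemma vf_zero: "(\<forall>j<3. vf x j = 0) \<Longrightarrow> x = (0,0,0)"
proof (cases x)
  case (fields x1 x2 x3)
  assume "\<forall>j<3. vf x j = 0"
  from this[rule_format, of 0] this[rule_format, of 1] this[rule_format, of 2] show ?thesis
    by (simp add: fields)
qed

lemma key:
  fixes D :: "'a::field s6"
  assumes r: "rk1 D" and b: "dot (mv D p) q = 0"
  shows "mv D p = (0,0,0) \<or> mv D q = (0,0,0)"
proof -
  have Z: "vf (mv D p) j * vf (mv D q) i = 0" if "j<3" "i<3" for i j
  proof -
    have "vf (mv D p) j * vf (mv D q) i = dot (mv D p) q * ent D j i"
      unfolding mv_sum[OF that(1)] mv_sum[OF that(2)] dot_sum
      by (rule key_gen[OF rk1_minors[OF r] S_ent that])
    thus ?thesis using b by simp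
  qed
  show ?thesis
  proof (rule ccontr)
    assume "\<not> ?thesis"
    hence "\<not> (\<forall>j<3. vf (mv D p) j = 0)" "\<not> (\<forall>j<3. vf (mv D q) j = 0)" using vf_zero by blast+
    then obtain j i where "j<3" "i<3" "vf (mv D p) j \<noteq> 0" "vf (mv D q) i \<noteq> 0" by blast
    thus False using Z by fastforce
  qed
qed



definition F1 :: "'a::field \<Rightarrow> 'a \<Rightarrow> 'a \<Rightarrow> 'a \<Rightarrow> 'a \<Rightarrow> 'a s6" where
  "F1 n y z s t = S6 (s*y*y + 2*t*y*z + (n*s-t)*z*z) (-(s*y+t*z)) (-(t*y+(n*s-t)*z)) s t (n*s-t)"
definition F2 :: "'a::field \<Rightarrow> 'a \<Rightarrow> 'a \<Rightarrow> 'a \<Rightarrow> 'a s6" where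
  "F2 n z s t = S6 s (-(t*z)) t ((n*s-t)*z*z) (-((n*s-t)*z)) (n*s-t)"
definition F3 :: "'a::field \<Rightarrow> 'a \<Rightarrow> 'a \<Rightarrow> 'a s6" where
  "F3 n s t = S6 s t 0 (n*s-t) 0 0"

definition G :: "'a::field \<Rightarrow> 'a \<times> 'a \<times> 'a \<Rightarrow> 'a \<times> 'a \<Rightarrow> 'a s6" where
  "G n p st = (case p of (p1,p2,p3) \<Rightarrow> case st of (s,t) \<Rightarrow>
     if p1 \<noteq> 0 then F1 n p2 p3 s t else if p2 \<noteq> 0 then F2 n p3 s t else F3 n s t)"

definition Pts :: "('a::field \<times> 'a \<times> 'a) set" where
  "Pts = (\<lambda>(y,z). (1,y,z)) ` UNIV \<union> (\<lambda>z. (0,1,z)) ` UNIV \<union> {(0,0,1)}"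

lemma Pts_cases: "p \<in> Pts \<Longrightarrow> (\<exists>y z. p = (1,y,z)) \<or> (\<exists>z. p = (0,1,z)) \<or> p = (0,0,1)"
  unfolding Pts_def by auto

lemma aniso:
  fixes n s t :: "'a::field"
  assumes AN: "\<forall>x. x*x + x \<noteq> n" and h: "s*(n*s-t) - t*t = 0"
  shows "s = 0 \<and> t = 0"
proof (cases "s = 0")
  case True thus ?thesis using h by simp
next
  case False
  have "(t/s)*(t/s) + t/s = n" using h False by (simp add: field_simps power2_eq_square algebra_simps)
  thus ?thesis using AN by blast
qed

lemma sing:
  fixes n s t w1 w2 :: "'a::field"
  assumes AN: "\<forall>x. x*x + x \<noteq> n" and h1: "s*w1 + t*w2 = 0" and h2: "t*w1 + (n*s-t)*w2 = 0"
  and w: "w1 \<noteq> 0 \<or> w2 \<noteq> 0"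
  shows "s = 0 \<and> t = 0"
proof -
  have "(s*(n*s-t) - t*t) * w1 = (n*s-t)*(s*w1 + t*w2) - t*(t*w1 + (n*s-t)*w2)" by (simp add: algebra_simps)
  hence a: "(s*(n*s-t) - t*t) * w1 = 0" using h1 h2 by simp
  have "(s*(n*s-t) - t*t) * w2 = s*(t*w1 + (n*s-t)*w2) - t*(s*w1 + t*w2)" by (simp add: algebra_simps)
  hence b: "(s*(n*s-t) - t*t) * w2 = 0" using h1 h2 by simp
  have "s*(n*s-t) - t*t = 0" using a b w by auto
  thus ?thesis using aniso[OF AN] by blast
qed

lemma G_ker: "p \<in> Pts \<Longrightarrow> mv (G n p st) p = (0,0,0)"
  by (cases st, drule Pts_cases, auto simp: G_def F1_def F2_def F3_def algebra_simps)

lemma G_zero: "G n p (0,0) = S6 0 0 0 0 0 0"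
  by (cases p, auto simp: G_def F1_def F2_def F3_def)

lemma G_sub: "sub6 (G n p (s,t)) (G n p (s',t')) = G n p (s-s', t-t')"
  by (cases p, auto simp: G_def F1_def F2_def F3_def algebra_simps)

lemma G_rk1:
  assumes AN: "\<forall>x. x*x + x \<noteq> n" and p: "p \<in> Pts" and r: "rk1 (G n p (s,t))"
  shows "s = 0 \<and> t = 0"
proof -
  have "s*(n*s-t) = t*t" using Pts_cases[OF p] r
    by (auto simp: G_def F1_def F2_def F3_def)
  thus ?thesis using aniso[OF AN] by simp
qed

lemma G_other:
  assumes AN: "\<forall>x. x*x + x \<noteq> n" and p: "p \<in> Pts" and q: "q \<in> Pts" and pq: "p \<noteq> q"
  and h: "mv (G n p (s,t)) q = (0,0,0)"
  shows "s = 0 \<and> t = 0"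
proof -
  obtain q1 q2 q3 where qq: "q = (q1,q2,q3)" by (cases q)
  from Pts_cases[OF p] show ?thesis
  proof (elim disjE exE)
    fix y z assume pp: "p = (1,y,z)"
    have e1: "s*(q2 - y*q1) + t*(q3 - z*q1) = 0" "t*(q2 - y*q1) + (n*s-t)*(q3 - z*q1) = 0"
      using h by (simp_all add: pp qq G_def F1_def algebra_simps)
    have "q2 - y*q1 \<noteq> 0 \<or> q3 - z*q1 \<noteq> 0"
      using Pts_cases[OF q] pq by (auto simp: pp qq)
    thus ?thesis using sing[OF AN e1] by blast
  next
    fix z assume pp: "p = (0,1,z)"
    have e1: "s*q1 + t*(q3 - z*q2) = 0" "t*q1 + (n*s-t)*(q3 - z*q2) = 0"
      using h by (simp_all add: pp qq G_def F2_def algebra_simps)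
    have "q1 \<noteq> 0 \<or> q3 - z*q2 \<noteq> 0"
      using Pts_cases[OF q] pq by (auto simp: pp qq)
    thus ?thesis using sing[OF AN e1] by blast
  next
    assume pp: "p = (0,0,1)"
    have e1: "s*q1 + t*q2 = 0" "t*q1 + (n*s-t)*q2 = 0"
      using h by (simp_all add: pp qq G_def F3_def algebra_simps)
    have "q1 \<noteq> 0 \<or> q2 \<noteq> 0"
      using Pts_cases[OF q] pq by (auto simp: pp qq)
    thus ?thesis using sing[OF AN e1] by blast
  qed
qed



lemma mv_sub: "mv (sub6 X Y) v = (0,0,0) \<longleftrightarrow> mv X v = mv Y v"
  by (cases X, cases Y, cases v, auto simp: algebra_simps)

lemma dot_sub: "dot (mv (sub6 X Y) p) q = dot (mv X p) q - dot (mv Y q) p"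
  by (cases X, cases Y, cases p, cases q, simp add: algebra_simps)

lemma sub6_Z: "sub6 X (S6 0 0 0 0 0 0) = X" by (cases X, simp)
lemma sub6_self: "sub6 X X = S6 0 0 0 0 0 0" by (cases X, simp)
lemma rk1_Z: "rk1 (S6 0 0 0 0 0 0)" by simp

lemma dist_ok:
  assumes AN: "\<forall>x. x*x + x \<noteq> n" and p: "p \<in> Pts" and q: "q \<in> Pts"
  and ne: "G n p (s,t) \<noteq> G n q (s',t')"
  shows "\<not> rk1 (sub6 (G n p (s,t)) (G n q (s',t')))"
proof
  assume r: "rk1 (sub6 (G n p (s,t)) (G n q (s',t')))"
  show False
  proof (cases "p = q")
    case True
    hence "rk1 (G n p (s-s', t-t'))" using r G_sub by metis
    hence "s - s' = 0 \<and> t - t' = 0" using G_rk1[OF AN p] by blast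
    thus False using ne True by simp
  next
    case False
    have "dot (mv (sub6 (G n p (s,t)) (G n q (s',t'))) p) q = 0"
      unfolding dot_sub G_ker[OF p] G_ker[OF q] by (cases p, cases q, simp)
    from key[OF r this] show False
    proof
      assume "mv (sub6 (G n p (s,t)) (G n q (s',t'))) p = (0,0,0)"
      hence "mv (G n q (s',t')) p = (0,0,0)" unfolding mv_sub G_ker[OF p] by simp
      hence "s' = 0 \<and> t' = 0" using G_other[OF AN q p] False by metis
      hence Y: "G n q (s',t') = S6 0 0 0 0 0 0" using G_zero[of n q] by simp
      hence "rk1 (G n p (s,t))" using r sub6_Z by metis
      hence "s = 0 \<and> t = 0" using G_rk1[OF AN p] by blast
      thus False using ne Y G_zero[of n p] by simp
    next
      assume "mv (sub6 (G n p (s,t)) (G n q (s',t'))) q = (0,0,0)"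
      hence "mv (G n p (s,t)) q = (0,0,0)" unfolding mv_sub G_ker[OF q] by simp
      hence "s = 0 \<and> t = 0" using G_other[OF AN p q] False by metis
      hence X: "G n p (s,t) = S6 0 0 0 0 0 0" using G_zero[of n p] by simp
      have "rk1 (sub6 (S6 0 0 0 0 0 0) (G n q (s',t')))" using r X by simp
      hence "rk1 (G n q (s',t'))" by (cases "G n q (s',t')", simp add: algebra_simps)
      hence "s' = 0 \<and> t' = 0" using G_rk1[OF AN q] by blast
      thus False using ne X G_zero[of n q] by simp
    qed
  qed
qed

lemma sm_index: "i < 3 \<Longrightarrow> j < 3 \<Longrightarrow> sm X $$ (i,j) = ent X i j"
  by (cases X, simp)

lemma sm_inj: "sm X = sm Y \<Longrightarrow> X = Y"
proof -
  assume h: "sm X = sm Y"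
  obtain a b c d e f where X: "X = S6 a b c d e f" by (cases X)
  obtain a' b' c' d' e' f' where Y: "Y = S6 a' b' c' d' e' f'" by (cases Y)
  have "\<And>i j. i<3 \<Longrightarrow> j<3 \<Longrightarrow> ent X i j = ent Y i j" using h sm_index by metis
  from this[of 0 0] this[of 0 1] this[of 0 2] this[of 1 1] this[of 1 2] this[of 2 2]
  show "X = Y" by (simp add: X Y)
qed

lemma sm_sub: "sm X - sm Y = sm (sub6 X Y)"
  apply (rule eq_matI)
  using sm_carrier[of X] sm_carrier[of Y] sm_carrier[of "sub6 X Y"]
  apply (auto simp: sm_index)
  apply (cases X, cases Y, auto dest!: less3)
  done

lemma sm_sym: "sm X \<in> sym_mats3"
  unfolding sym_mats3_def
  apply (auto simp: sm_carrier)
  apply (rule eq_matI)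
  using sm_carrier[of X]
  apply (auto simp: sm_index)
  apply (cases X, auto dest!: less3)
  done



lemma exists_n: "\<exists>n::'a::{field,finite}. \<forall>x. x*x + x \<noteq> n"
proof -
  let ?f = "\<lambda>x::'a. x*x + x"
  have "?f 0 = ?f (-1)" by simp
  moreover have "(0::'a) \<noteq> -1" by simp
  ultimately have "\<not> inj ?f" unfolding inj_def by blast
  hence "\<not> surj ?f" using finite_UNIV_surj_inj[of ?f] by auto
  thus ?thesis by (metis (mono_tags, lifting) UNIV_I image_iff subsetI subset_antisym top_greatest)
qed

lemma card_Pts:
  assumes "card (UNIV :: 'a::{field,finite} set) = q"
  shows "card (Pts :: ('a \<times> 'a \<times> 'a) set) = q*q + q + 1"
proof -
  let ?A = "(\<lambda>(y,z). (1::'a,y,z)) ` (UNIV :: ('a\<times>'a) set)"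
  let ?B = "(\<lambda>z. (0::'a,1::'a,z)) ` (UNIV :: 'a set)"
  have U2: "card (UNIV :: ('a\<times>'a) set) = q*q"
    by (metis UNIV_Times_UNIV card_cartesian_product assms)
  have cA: "card ?A = q*q"
    by (subst card_image, auto simp: inj_on_def U2)
  have cB: "card ?B = q"
    by (subst card_image, auto simp: inj_on_def assms)
  have d1: "?A \<inter> ?B = {}" by auto
  have d2: "(0,0,1) \<notin> ?A \<union> ?B" by auto
  have eq: "(Pts :: ('a \<times> 'a \<times> 'a) set) = insert (0,0,1) (?A \<union> ?B)" unfolding Pts_def by auto
  have "card (Pts :: ('a \<times> 'a \<times> 'a) set) = card (?A \<union> ?B) + 1" unfolding eq
    by (rule trans[OF card_insert_disjoint[OF _ d2]], auto)
  also have "card (?A \<union> ?B) = q*q + q" using card_Un_disjoint[OF _ _ d1] cA cB by simp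
  finally show ?thesis .
qed



lemma sm_dim: "dim_row (sm X) = 3" "dim_col (sm X) = 3"
  using sm_carrier[of X] by auto

lemma rank_le2_ex:
  fixes n :: "'a::field"
  shows "vec_space.rank 3 (sm (S6 1 0 0 n 0 0)) \<le> 2"
proof -
  have eq: "sm (S6 1 0 0 n 0 0) = sm (S6 1 0 0 0 0 0) + sm (S6 0 0 0 n 0 0)"
  proof (rule eq_matI)
    fix i j assume ij: "i < dim_row (sm (S6 1 0 0 0 0 0) + sm (S6 0 0 0 n 0 0))"
      "j < dim_col (sm (S6 1 0 0 0 0 0) + sm (S6 0 0 0 n 0 0))"
    hence ij': "i < 3" "j < 3" by (simp_all add: sm_dim)
    show "sm (S6 1 0 0 n 0 0) $$ (i, j) = (sm (S6 1 0 0 0 0 0) + sm (S6 0 0 0 n 0 0)) $$ (i, j)"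
      using ij' apply (simp add: sm_dim sm_index)
      apply (drule less3, drule less3)
      apply (elim disjE; simp)
      done
  qed (simp_all add: sm_dim)
  have r1: "vec_space.rank 3 (sm (S6 (1::'a) 0 0 0 0 0)) \<le> 1"
    apply (rule vec_space.rank_le_1_product_entries[of _ _ 3 "\<lambda>i. if i = 0 then 1 else 0" "\<lambda>j. if j = 0 then 1 else 0"])
    apply (simp add: sm_carrier)
    apply (subst sm_index, simp, simp)
    apply (simp only: sm_dim)
    apply (drule less3, drule less3)
    apply (elim disjE; simp)
    done
  have r2: "vec_space.rank 3 (sm (S6 0 0 0 n 0 0)) \<le> 1"
    apply (rule vec_space.rank_le_1_product_entries[of _ _ 3 "\<lambda>i. if i = 1 then n else 0" "\<lambda>j. if j = 1 then 1 else 0"])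
    apply (simp add: sm_carrier)
    apply (subst sm_index, simp, simp)
    apply (simp only: sm_dim)
    apply (drule less3, drule less3)
    apply (elim disjE; simp)
    done
  have "vec_space.rank 3 (sm (S6 1 0 0 n 0 0)) \<le> vec_space.rank 3 (sm (S6 (1::'a) 0 0 0 0 0)) + vec_space.rank 3 (sm (S6 0 0 0 n 0 0))"
    unfolding eq by (rule vec_space.rank_subadditive[OF sm_carrier sm_carrier])
  thus ?thesis using r1 r2 by simp
qed

theorem mainTheorem8:
  fixes q :: nat
  assumes "card (UNIV :: ('a::{field,finite}) set) = q"
  shows "\<exists>C :: 'a mat set. is_code 2 C \<and> card C = (q^2 - 1) * (q^2 + q + 1) + 1"
proof -
  obtain n :: 'a where AN: "\<forall>x. x*x + x \<noteq> n" using exists_n by blast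
  define Z :: "'a s6" where "Z = S6 0 0 0 0 0 0"
  define Nz :: "('a \<times> 'a) set" where "Nz = UNIV - {(0,0)}"
  define C6 where "C6 = insert Z ((\<lambda>(p,st). G n p st) ` (Pts \<times> Nz))"
  define C where "C = sm ` C6"
  have U2: "card (UNIV :: ('a\<times>'a) set) = q*q"
    by (metis UNIV_Times_UNIV card_cartesian_product assms)
  have cNz: "card Nz = q*q - 1" unfolding Nz_def using U2 by (simp add: card_Diff_singleton)
  have Zn: "Z \<notin> (\<lambda>(p,st). G n p st) ` (Pts \<times> Nz)"
  proof
    assume "Z \<in> (\<lambda>(p,st). G n p st) ` (Pts \<times> Nz)"
    then obtain p s t where "p \<in> Pts" "(s,t) \<in> Nz" "Z = G n p (s,t)" by auto
    thus False using G_rk1[OF AN, of p s t] rk1_Z unfolding Z_def Nz_def by (metis DiffD2 singletonI)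
  qed
  have inj: "inj_on (\<lambda>(p,st). G n p st) (Pts \<times> Nz)"
  proof (rule inj_onI)
    fix x y assume hx: "x \<in> Pts \<times> Nz" and hy: "y \<in> Pts \<times> Nz"
      and hxy: "(\<lambda>(p,st). G n p st) x = (\<lambda>(p,st). G n p st) y"
    obtain p s t where x: "x = (p,(s,t))" by (cases x, auto)
    obtain p' s' t' where y: "y = (p',(s',t'))" by (cases y, auto)
    have h: "p \<in> Pts" "(s,t) \<in> Nz" "p' \<in> Pts" "(s',t') \<in> Nz"
      "G n p (s,t) = G n p' (s',t')" using hx hy hxy x y by auto
    show "x = y"
    proof (cases "p = p'")
      case True
      have "rk1 (G n p (s-s', t-t'))" using G_sub[of n p s t s' t'] h(5) True sub6_self rk1_Z by metis
      hence "s - s' = 0 \<and> t - t' = 0" using G_rk1[OF AN h(1)] by blast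
      thus ?thesis using True x y by simp
    next
      case False
      have "mv (G n p (s,t)) p' = (0,0,0)" using h(5) G_ker[OF h(3)] by simp
      hence "s = 0 \<and> t = 0" using G_other[OF AN h(1) h(3) False] by blast
      thus ?thesis using h(2) unfolding Nz_def by simp
    qed
  qed
  have fin: "finite ((Pts :: ('a\<times>'a\<times>'a) set) \<times> Nz)" by simp
  have cC6: "card C6 = card ((Pts :: ('a\<times>'a\<times>'a) set) \<times> Nz) + 1"
    unfolding C6_def using Zn card_image[OF inj] fin by simp
  have cC: "card C = card C6" unfolding C_def
    by (rule card_image, rule inj_onI, rule sm_inj)
  have card_eq: "card C = (q^2 - 1) * (q^2 + q + 1) + 1"
    unfolding cC cC6 card_cartesian_product card_Pts[OF assms] cNz
    by (simp add: power2_eq_square)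
  have C6_elem: "\<exists>p s t. p \<in> Pts \<and> X = G n p (s,t)" if hX: "X \<in> C6" for X
  proof -
    have "(0::'a,0::'a,1::'a) \<in> Pts" unfolding Pts_def by simp
    note pz = this
    show ?thesis
    proof (cases "X = Z")
      case True thus ?thesis using pz G_zero[of n "(0,0,1)"] unfolding Z_def by metis
    next
      case False
      then obtain p s t where "p \<in> Pts" "X = G n p (s,t)" using hX unfolding C6_def by auto
      thus ?thesis by blast
    qed
  qed
  let ?R = "{rank_dist c1 c2 | c1 c2. c1 \<in> C \<and> c2 \<in> C \<and> c1 \<noteq> c2}"
  have finC: "finite C" unfolding C_def C6_def by simp
  have finR: "finite ?R"
  proof -
    have "?R \<subseteq> (\<lambda>(c1,c2). rank_dist c1 c2) ` (C \<times> C)" by auto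
    thus ?thesis using finC finite_subset by blast
  qed
  have geR: "2 \<le> r" if "r \<in> ?R" for r
  proof -
    obtain c1 c2 where c: "c1 \<in> C" "c2 \<in> C" "c1 \<noteq> c2" "r = rank_dist c1 c2" using \<open>r \<in> ?R\<close> by blast
    obtain X Y where XY: "X \<in> C6" "Y \<in> C6" "c1 = sm X" "c2 = sm Y" using c unfolding C_def by auto
    obtain p s t where X: "p \<in> Pts" "X = G n p (s,t)" using C6_elem[OF XY(1)] by blast
    obtain p' s' t' where Y: "p' \<in> Pts" "Y = G n p' (s',t')" using C6_elem[OF XY(2)] by blast
    have "X \<noteq> Y" using c XY by auto
    hence "\<not> rk1 (sub6 X Y)" using dist_ok[OF AN X(1) Y(1)] X Y by simp
    hence "2 \<le> vec_space.rank 3 (sm (sub6 X Y))" by (rule rank_ge2)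
    thus ?thesis using c XY unfolding rank_dist_def by (simp add: sm_sub)
  qed
  have twoR: "2 \<in> ?R"
  proof -
    let ?X = "G n (0,0,1) (1,0)"
    have pts: "(0::'a,0::'a,1::'a) \<in> Pts" unfolding Pts_def by simp
    have X: "?X = S6 1 0 0 n 0 0" by (simp add: G_def F3_def)
    have m: "((0,0,1),(1,0)) \<in> (Pts :: ('a\<times>'a\<times>'a) set) \<times> Nz" using pts by (simp add: Nz_def)
    have "?X \<in> C6" unfolding C6_def by (rule insertI2, rule image_eqI[OF _ m], simp)
    hence XC: "sm ?X \<in> C" unfolding C_def by simp
    have ZC: "sm Z \<in> C" unfolding C_def C6_def by simp
    have ne: "?X \<noteq> Z" unfolding X Z_def by simp
    have "\<not> rk1 (sub6 ?X Z)"
      using dist_ok[OF AN pts pts, of 1 0 0 0] ne G_zero[of n "(0,0,1)"] unfolding Z_def by simp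
    hence "2 \<le> vec_space.rank 3 (sm (sub6 ?X Z))" by (rule rank_ge2)
    moreover have "sub6 ?X Z = S6 1 0 0 n 0 0" unfolding X Z_def by simp
    ultimately have "rank_dist (sm ?X) (sm Z) = 2"
      using rank_le2_ex[of n] unfolding rank_dist_def by (simp add: sm_sub)
    moreover have "sm ?X \<noteq> sm Z" using ne sm_inj by metis
    ultimately show ?thesis using XC ZC by (metis (mono_tags, lifting) mem_Collect_eq)
  qed
  have "Min ?R = 2" by (rule Min_eqI[OF finR geR twoR])
  moreover have "C \<noteq> {}" unfolding C_def C6_def by simp
  moreover have "C \<subseteq> sym_mats3" unfolding C_def using sm_sym by auto
  ultimately have "is_code 2 C" unfolding is_code_def by simp
  thus ?thesis using card_eq by blast
qed


end
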